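(* Let $k,k'\in\mathbb{N}$ with $1\le k'\le k$. Let $\bar w,\bar x,\bar y,\bar z$ be binary sequences with $|\bar w|\ge|\bar x|\ge|\bar y|\ge|\bar z|$, each of which is top $k'$ sorted, and let $s=|\bar w|+|\bar x|+|\bar y|+|\bar z|\ge k$. Then $\mathrm{4oe\_merge}^s_k(\bar w,\bar x,\bar y,\bar z)$ is top $k'$ sorted.
   Context: Sorted means non-increasing. A binary sequence $\bar r$ of length $n$ is top $k'$ sorted if $\langle r_1,\dots,r_{\min(k',n)}\rangle$ is sorted and $r_i\ge r_j$ for all $i\le k'<j\le n$ (for $n\le k'$ this just means sorted). $\bar r_{odd}=\langle r_1,r_3,\dots\rangle$, $\bar r_{even}=\langle r_2,r_4,\dots\rangle$. For sequences $\bar a^1,\dots,\bar a^p$ with non-increasing lengths, $\mathrm{zip}(\bar a^1,\dots,\bar a^p)$ lists their elements in row-major order: $\langle a^1_1,a^2_1,\dots,a^p_1\rangle$ followed by $\mathrm{zip}$ of the remainders, where sequences that become empty are omitted. $\mathrm{oe\_combine}_K(\bar a,\bar b)$ (for $|\bar a|\ge|\bar b|$): let $\bar u=\mathrm{zip}(\bar a,\bar b)$; for $i=1,\dots,\lfloor\min(K,|\bar u|-1)/2\rfloor$ replace $(u_{2i},u_{2i+1})$ by $(\max,\min)$ of the pair; return $\bar u$. The network $\mathrm{4oe\_merge}^s_k(\bar w,\bar x,\bar y,\bar z)$ (for $|\bar w|\ge|\bar x|\ge|\bar y|\ge|\bar z|$, $s$ their total length, $k\ge 0$) is defined recursively, with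 $k_1,\dots,k_4$ the lengths of $\bar w,\bar x,\bar y,\bar z$: if $k_2=0$, return $\bar w$; else if $k_1=1$, return $\mathrm{zip}(\bar w,\bar x,\bar y,\bar z)$ sorted into non-increasing order; otherwise let $sa=\sum_j\lceil k_j/2\rceil$, $sb=\sum_j\lfloor k_j/2\rfloor$, $\bar a=\mathrm{4oe\_merge}^{sa}_{\min(sa,\lfloor k/2\rfloor+2)}(\bar w_{odd},\bar x_{odd},\bar y_{odd},\bar z_{odd})$, $\bar b=\mathrm{4oe\_merge}^{sb}_{\min(sb,\lfloor k/2\rfloor)}(\bar w_{even},\bar x_{even},\bar y_{even},\bar z_{even})$, $\bar c=\mathrm{oe\_combine}_{\lfloor k/2\rfloor+1}(\bar a_{odd},\bar b_{odd})$, $\bar d=\mathrm{oe\_combine}_{\lfloor k/2\rfloor}(\bar a_{even},\bar b_{even})$, and return $\mathrm{oe\_combine}_k(\bar c,\bar d)$. *)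

theory Defs
  imports Main
begin

text \<open>Binary sequences are bool lists, with False < True (0 < 1).
  Positions are 0-indexed in Isabelle; paper positions are 1-indexed.\<close>

definition sorted_desc :: "bool list \<Rightarrow> bool" where
  "sorted_desc r = sorted_wrt (\<ge>) r"

text \<open>top k' sorted: r_1..r_{min(k',n)} sorted and r_i \<ge> r_j for i \<le> k' < j \<le> n
  (1-indexed), i.e. i < k' \<le> j < n 0-indexed.\<close>
definition top_sorted :: "nat \<Rightarrow> bool list \<Rightarrow> bool" where
  "top_sorted k' r \<longleftrightarrow> sorted_desc (take k' r) \<and>
     (\<forall>i j. i < k' \<longrightarrow> k' \<le> j \<longrightarrow> j < length r \<longrightarrow> r ! j \<le> r ! i)"

text \<open>odds: r_1, r_3, ... (1-indexed); evens: r_2, r_4, ...\<close>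
fun odds :: "'a list \<Rightarrow> 'a list" where
  "odds [] = []"
| "odds [a] = [a]"
| "odds (a # b # xs) = a # odds xs"

definition evens :: "'a list \<Rightarrow> 'a list" where
  "evens xs = odds (drop 1 xs)"

lemma length_odds: "length (odds xs) = (length xs + 1) div 2"
  by (induction xs rule: odds.induct) auto

lemma length_evens: "length (evens xs) = length xs div 2"
  by (simp add: evens_def length_odds)

text \<open>Row-major zip of several sequences; row i consists of the i-th elements
  of those sequences that are long enough (exhausted sequences are omitted).\<close>
definition zipn :: "'a list list \<Rightarrow> 'a list" where
  "zipn xss = concat (map (\<lambda>i. map (\<lambda>xs. xs ! i) (filter (\<lambda>xs. i < length xs) xss))
                          [0..<Max (insert 0 (set (map length xss)))])"

text \<open>Comparator on paper positions (2i, 2i+1), i.e. 0-indexed (2i-1, 2i).\<close>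
definition cmp_pair :: "bool list \<Rightarrow> nat \<Rightarrow> bool list" where
  "cmp_pair u i = u[2*i - 1 := max (u ! (2*i - 1)) (u ! (2*i)), 2*i := min (u ! (2*i - 1)) (u ! (2*i))]"

definition oe_combine :: "nat \<Rightarrow> bool list \<Rightarrow> bool list \<Rightarrow> bool list" where
  "oe_combine K a b = (let u = zipn [a, b]; m = min K (length u - 1) div 2
                       in fold (\<lambda>i v. cmp_pair v i) [1..<m+1] u)"

text \<open>4oe_merge^s_k(w,x,y,z); the parameter s is always the total length of the inputs,
  so it is not passed explicitly. The base case test "k1 = 1" is written "k1 \<le> 1";
  under the standing assumption k1 \<ge> k2 > 0 these coincide (the form used here makes
  the function total on all inputs).\<close>
function merge4 :: "nat \<Rightarrow> bool list \<Rightarrow> bool list \<Rightarrow> bool list \<Rightarrow> bool list \<Rightarrow> bool list" where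
  "merge4 k w x y z =
    (if length x = 0 then w
     else if length w \<le> 1 then rev (sort (zipn [w, x, y, z]))
     else
       (let sa = (length w + 1) div 2 + (length x + 1) div 2 + (length y + 1) div 2 + (length z + 1) div 2;
            sb = length w div 2 + length x div 2 + length y div 2 + length z div 2;
            a = merge4 (min sa (k div 2 + 2)) (odds w) (odds x) (odds y) (odds z);
            b = merge4 (min sb (k div 2)) (evens w) (evens x) (evens y) (evens z);
            c = oe_combine (k div 2 + 1) (odds a) (odds b);
            d = oe_combine (k div 2) (evens a) (evens b)
        in oe_combine k c d))"
  by pat_completeness auto
termination
  by (relation "measure (\<lambda>(k, w, x, y, z). length w + length x + length y + length z)")
     (auto simp: length_odds length_evens intro!: add_less_le_mono add_le_mono)

end

theory Submission
  imports Defs "HOL-Library.Multiset"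
begin


lemma odds_Cons: "odds (a # xs) = a # evens xs"
  by (cases xs) (auto simp: evens_def)

lemma evens_Cons: "evens (a # xs) = odds xs"
  by (simp add: evens_def)

lemma evens_Nil[simp]: "evens [] = []"
  by (simp add: evens_def)

lemma odds_evens_nth:
  "(\<forall>i < length (odds xs). odds xs ! i = xs ! (2*i)) \<and>
   (\<forall>i < length (evens xs). evens xs ! i = xs ! (2*i+1))"
proof (induction xs)
  case Nil then show ?case by simp
next
  case (Cons a xs)
  show ?case
  proof (intro conjI allI impI)
    fix i assume "i < length (odds (a # xs))"
    then show "odds (a # xs) ! i = (a # xs) ! (2 * i)"
      using Cons by (cases i) (auto simp: odds_Cons length_evens)
  next
    fix i assume "i < length (evens (a # xs))"
    then show "evens (a # xs) ! i = (a # xs) ! (2 * i + 1)"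
      using Cons by (auto simp: evens_Cons)
  qed
qed

lemma odds_nth: "i < length (odds xs) \<Longrightarrow> odds xs ! i = xs ! (2*i)"
  using odds_evens_nth by blast
lemma evens_nth: "i < length (evens xs) \<Longrightarrow> evens xs ! i = xs ! (2*i+1)"
  using odds_evens_nth by blast

lemma mset_odds_evens: "mset (odds xs) + mset (evens xs) = mset xs"
  by (induction xs) (simp_all add: odds_Cons evens_Cons ac_simps)

lemma zipn2_Cons: "zipn [a # as, b # bs] = a # b # zipn [as, bs]"
proof -
  define F where "F = (\<lambda>i. map (\<lambda>xs. xs ! i) (filter (\<lambda>xs. i < length xs) [a#as, b#bs]))"
  define G where "G = (\<lambda>i. map (\<lambda>xs. xs ! i) (filter (\<lambda>xs. i < length xs) [as, bs]))"
  define n where "n = max (length as) (length bs)"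
  have m1: "Max (insert 0 (set (map length [a # as, b # bs]))) = Suc n"
    by (simp add: n_def)
  have m2: "Max (insert 0 (set (map length [as, bs]))) = n"
    by (simp add: n_def)
  have e1: "zipn [a # as, b # bs] = concat (map F [0..<Suc n])"
    unfolding zipn_def m1 F_def ..
  have e2: "zipn [as, bs] = concat (map G [0..<n])"
    unfolding zipn_def m2 G_def ..
  have "[0..<Suc n] = 0 # map Suc [0..<n]"
    by (simp add: upt_conv_Cons map_Suc_upt)
  then have "concat (map F [0..<Suc n]) = F 0 @ concat (map (F \<circ> Suc) [0..<n])"
    by simp
  also have "map (F \<circ> Suc) [0..<n] = map G [0..<n]"
    by (rule map_cong) (simp_all add: F_def G_def)
  finally show ?thesis using e1 e2 by (simp add: F_def)
qed

lemma zipn2_Nil: "zipn [x, []] = x"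
proof -
  have m: "Max (insert 0 (set (map length [x, []]))) = length x" by simp
  have "concat (map (\<lambda>i. map (\<lambda>xs. xs ! i) (filter (\<lambda>xs. i < length xs) [x, []])) [0..<length x])
     = concat (map (\<lambda>i. [x ! i]) [0..<length x])"
    by (rule arg_cong[where f=concat], rule map_cong) auto
  also have "\<dots> = map (\<lambda>i. x ! i) [0..<length x]"
    by (induction x rule: rev_induct) auto
  also have "\<dots> = x" by (simp add: map_nth)
  finally show ?thesis unfolding zipn_def m .
qed

lemma zipn2: "length y \<le> length x \<Longrightarrow> length (zipn [x, y]) = length x + length y \<and>
  (\<forall>j < length x + length y. zipn [x, y] ! j = (if j < 2 * length y then (if even j then x ! (j div 2) else y ! (j div 2)) else x ! (j - length y)))"
proof (induction y arbitrary: x)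
  case Nil then show ?case by (simp add: zipn2_Nil)
next
  case (Cons b bs)
  then obtain a as where x: "x = a # as" by (cases x) auto
  with Cons have IH: "length (zipn [as, bs]) = length as + length bs \<and>
  (\<forall>j < length as + length bs. zipn [as, bs] ! j = (if j < 2 * length bs then (if even j then as ! (j div 2) else bs ! (j div 2)) else as ! (j - length bs)))"
    by simp
  show ?case
  proof (intro conjI allI impI)
    show "length (zipn [x, b # bs]) = length x + length (b # bs)" using IH x by (simp add: zipn2_Cons)
  next
    fix j assume j: "j < length x + length (b # bs)"
    show "zipn [x, b # bs] ! j = (if j < 2 * length (b # bs) then (if even j then x ! (j div 2) else (b # bs) ! (j div 2)) else x ! (j - length (b # bs)))"
    proof (cases "j < 2")
      case True then show ?thesis using x by (cases j) (auto simp: zipn2_Cons)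
    next
      case False
      then obtain j' where j': "j = Suc (Suc j')" by (metis add_2_eq_Suc le_add_diff_inverse not_less)
      have "zipn [x, b # bs] ! j = zipn [as, bs] ! j'" using x j' by (simp add: zipn2_Cons)
      also have "\<dots> = (if j' < 2 * length bs then (if even j' then as ! (j' div 2) else bs ! (j' div 2)) else as ! (j' - length bs))"
        using IH j j' x by simp
      finally show ?thesis using x j' j by (auto simp: nth_Cons' split: if_splits)
    qed
  qed
qed

lemma max_bool: "max (a::bool) b = (a \<or> b)" by (auto simp: max_def)
lemma min_bool: "min (a::bool) b = (a \<and> b)" by (auto simp: min_def)

lemma mset_cmp_pair:
  assumes "1 \<le> i" "2*i < length u"
  shows "mset (cmp_pair u i) = mset u"
proof (cases "u ! (2*i-1) \<or> \<not> u ! (2*i)")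
  case True
  then have "cmp_pair u i = u[2*i-1 := u!(2*i-1), 2*i := u!(2*i)]"
  proof -
    have "(u ! (2*i-1) \<or> u ! (2*i)) = u ! (2*i-1)" "(u ! (2*i-1) \<and> u ! (2*i)) = u ! (2*i)"
      using True by auto
    then show ?thesis unfolding cmp_pair_def max_bool min_bool by simp
  qed
  then show ?thesis by simp
next
  case False
  then have "cmp_pair u i = u[2*i-1 := u!(2*i), 2*i := u!(2*i-1)]"
    unfolding cmp_pair_def max_bool min_bool by simp
  then show ?thesis using assms mset_swap[of "2*i" u "2*i-1"] by simp
qed

lemma length_cmp_pair[simp]: "length (cmp_pair u i) = length u"
  by (simp add: cmp_pair_def)

lemma fold_cmp:
  assumes "2*m < length u \<or> m = 0"
  shows "length (fold (\<lambda>i v. cmp_pair v i) [1..<m+1] u) = length u \<and>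
    mset (fold (\<lambda>i v. cmp_pair v i) [1..<m+1] u) = mset u \<and>
    (\<forall>j<length u. fold (\<lambda>i v. cmp_pair v i) [1..<m+1] u ! j =
      (if 0 < j \<and> j \<le> 2*m then (if odd j then u!j \<or> u!(j+1) else u!(j-1) \<and> u!j) else u!j))"
  using assms
proof (induction m)
  case 0 then show ?case by simp
next
  case (Suc m)
  define v where "v = fold (\<lambda>i v. cmp_pair v i) [1..<m+1] u"
  have lu: "2 * Suc m < length u" using Suc.prems by auto
  then have IH: "length v = length u \<and> mset v = mset u \<and> (\<forall>j<length u. v ! j =
      (if 0 < j \<and> j \<le> 2*m then (if odd j then u!j \<or> u!(j+1) else u!(j-1) \<and> u!j) else u!j))"
    using Suc.IH unfolding v_def by auto
  have eq: "fold (\<lambda>i v. cmp_pair v i) [1..<Suc m+1] u = cmp_pair v (Suc m)"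
    by (simp add: v_def)
  have v1: "v ! (2*m+1) = u ! (2*m+1)" and v2: "v ! (2*m+2) = u ! (2*m+2)"
    using IH lu by auto
  have cp: "cmp_pair v (Suc m) = v[2*m+1 := (u!(2*m+1) \<or> u!(2*m+2)), 2*m+2 := (u!(2*m+1) \<and> u!(2*m+2))]"
    unfolding cmp_pair_def max_bool min_bool using v1 v2 by (simp add: numeral_2_eq_2)
  show ?case
  proof (intro conjI allI impI)
    show "length (fold (\<lambda>i v. cmp_pair v i) [1..<Suc m + 1] u) = length u" using eq IH by simp
    show "mset (fold (\<lambda>i v. cmp_pair v i) [1..<Suc m + 1] u) = mset u"
      using eq IH mset_cmp_pair[of "Suc m" v] lu by simp
  next
    fix j assume j: "j < length u"
    show "fold (\<lambda>i v. cmp_pair v i) [1..<Suc m + 1] u ! j =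
      (if 0 < j \<and> j \<le> 2 * Suc m then if odd j then u ! j \<or> u ! (j + 1) else u ! (j - 1) \<and> u ! j else u ! j)"
      unfolding eq cp using IH j lu
      by (auto simp: nth_list_update)
  qed
qed

lemma mset_zipn2: "length y \<le> length x \<Longrightarrow> mset (zipn [x, y]) = mset x + mset y"
proof (induction y arbitrary: x)
  case Nil then show ?case by (simp add: zipn2_Nil)
next
  case (Cons b bs)
  then obtain a as where x: "x = a # as" by (cases x) auto
  with Cons show ?case by (simp add: zipn2_Cons)
qed

lemma oe_combine_props:
  assumes "length y \<le> length x"
  shows "length (oe_combine K x y) = length x + length y \<and>
    mset (oe_combine K x y) = mset x + mset y \<and>
    (\<forall>j < length x + length y. oe_combine K x y ! j =
      (let u = zipn [x, y]; m = min K (length u - 1) div 2 in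
       (if 0 < j \<and> j \<le> 2*m then (if odd j then u!j \<or> u!(j+1) else u!(j-1) \<and> u!j) else u!j)))"
proof -
  define u where "u = zipn [x, y]"
  define m where "m = min K (length u - 1) div 2"
  have lu: "length u = length x + length y" using zipn2[OF assms] u_def by simp
  have c: "2*m < length u \<or> m = 0" unfolding m_def by auto
  have oe: "oe_combine K x y = fold (\<lambda>i v. cmp_pair v i) [1..<m+1] u"
    unfolding oe_combine_def u_def m_def Let_def ..
  note F = fold_cmp[OF c]
  show ?thesis
    unfolding Let_def oe u_def[symmetric] m_def[symmetric]
  proof (intro conjI)
    show "length (fold (\<lambda>i v. cmp_pair v i) [1..<m + 1] u) = length x + length y"
      using F lu by simp
    show "mset (fold (\<lambda>i v. cmp_pair v i) [1..<m + 1] u) = mset x + mset y"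
      using F mset_zipn2[OF assms] u_def by simp
    show "\<forall>j<length x + length y. fold (\<lambda>i v. cmp_pair v i) [1..<m + 1] u ! j =
      (if 0 < j \<and> j \<le> 2*m then (if odd j then u!j \<or> u!(j+1) else u!(j-1) \<and> u!j) else u!j)"
      using F lu by simp
  qed
qed

definition pre :: "nat \<Rightarrow> bool list \<Rightarrow> bool" where
  "pre n r \<longleftrightarrow> n \<le> length r \<and> (\<forall>j<n. r ! j)"

lemma pre_mono: "pre n r \<Longrightarrow> n' \<le> n \<Longrightarrow> pre n' r"
  by (auto simp: pre_def)

lemma combine_core:
  assumes ly: "length y \<le> length x" and px: "pre p x" and py: "pre e y"
    and eo: "e \<le> p" "p \<le> e + 2"
  shows "pre (min K (p+e)) (oe_combine K x y)"
proof -
  define u where "u = zipn [x, y]"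
  define m where "m = min K (length u - 1) div 2"
  have lu: "length u = length x + length y" using zipn2[OF ly] u_def by simp
  have unth: "\<And>j. j < length x + length y \<Longrightarrow> u ! j = (if j < 2 * length y then (if even j then x ! (j div 2) else y ! (j div 2)) else x ! (j - length y))"
    using zipn2[OF ly] u_def by simp
  note P = oe_combine_props[OF ly, of K]
  have rnth: "\<And>j. j < length x + length y \<Longrightarrow> oe_combine K x y ! j =
       (if 0 < j \<and> j \<le> 2*m then (if odd j then u!j \<or> u!(j+1) else u!(j-1) \<and> u!j) else u!j)"
    using P unfolding u_def m_def Let_def by simp
  have ox: "p \<le> length x" and xT: "\<And>i. i < p \<Longrightarrow> x ! i" using px by (auto simp: pre_def)
  have ey: "e \<le> length y" and yT: "\<And>i. i < e \<Longrightarrow> y ! i" using py by (auto simp: pre_def)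
  have uT: "u ! j" if j: "j < p + e" and nex: "\<not> (j = 2*e+1 \<and> p = e+2 \<and> e < length y)" for j
  proof -
    have jl: "j < length x + length y" using j ox ey by simp
    show ?thesis
    proof (cases "j < 2 * length y")
      case True
      show ?thesis
      proof (cases "even j")
        case True
        then have "j div 2 < p" using j eo by presburger
        then show ?thesis using unth[OF jl] \<open>j < 2 * length y\<close> True xT by simp
      next
        case False
        then have "j div 2 < e" using j eo nex \<open>j < 2 * length y\<close> by presburger
        then show ?thesis using unth[OF jl] \<open>j < 2 * length y\<close> False yT by simp
      qed
    next
      case False
      then have "j - length y < p" using j ey by linarith
      then show ?thesis using unth[OF jl] False xT by simp
    qed
  qed
  show ?thesis unfolding pre_def
  proof (intro conjI allI impI)
    show "min K (p + e) \<le> length (oe_combine K x y)" using P ox ey by simp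
  next
    fix j assume j: "j < min K (p + e)"
    have jl: "j < length x + length y" using j ox ey by simp
    show "oe_combine K x y ! j"
    proof (cases "j = 2*e+1 \<and> p = e+2 \<and> e < length y")
      case True
      have m: "j \<le> 2*m" using j True lu ox unfolding m_def by auto
      have j1: "j + 1 < length x + length y" using True ox by simp
      have "u ! (j+1)"
      proof -
        have "x ! (e+1)" using xT True by simp
        moreover have "u ! (j+1) = x ! (e+1)"
        proof (cases "j+1 < 2 * length y")
          case c: True
          have "even (j+1)" "(j+1) div 2 = e+1" using True by auto
          then show ?thesis using unth[OF j1] c by simp
        next
          case c: False
          then have "j + 1 - length y = e+1" using True by linarith
          then show ?thesis using unth[OF j1] c by simp
        qed
        ultimately show ?thesis by simp
      qed
      then show ?thesis using rnth[OF jl] True m by simp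
    next
      case False
      then have uj: "u ! j" using uT j by simp
      show ?thesis
      proof (cases "0 < j \<and> j \<le> 2*m \<and> even j")
        case True
        have "\<not> (j-1 = 2*e+1 \<and> p = e+2 \<and> e < length y)" using j True by auto
        then have "u ! (j-1)" using uT[of "j-1"] j True by auto
        then show ?thesis using rnth[OF jl] True uj by simp
      next
        case False
        then show ?thesis using rnth[OF jl] uj by auto
      qed
    qed
  qed
qed

lemma combine:
  assumes "length y \<le> length x" "pre p x" "pre q y"
  shows "pre (min K (min p (q+2) + min q p)) (oe_combine K x y)"
  using combine_core[OF assms(1) pre_mono[OF assms(2), of "min p (q+2)"] pre_mono[OF assms(3), of "min q p"]]
  by simp

definition lead :: "bool list \<Rightarrow> nat" where
  "lead r = length (takeWhile id r)"

lemma lead_simps[simp]: "lead [] = 0" "lead (a # r) = (if a then Suc (lead r) else 0)"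
  by (auto simp: lead_def)

lemma pre_lead: "pre (lead r) r"
  by (induction r) (auto simp: pre_def nth_Cons' split: if_splits)

lemma pre_le_lead: "pre n r \<Longrightarrow> n \<le> lead r"
proof (induction r arbitrary: n)
  case Nil then show ?case by (simp add: pre_def)
next
  case (Cons a r)
  show ?case
  proof (cases n)
    case 0 then show ?thesis by simp
  next
    case (Suc n')
    then have "a" "pre n' r" using Cons.prems by (auto simp: pre_def)
    then show ?thesis using Cons.IH Suc by simp
  qed
qed

lemma pre_odds: assumes "pre n w" shows "pre ((n+1) div 2) (odds w)"
  unfolding pre_def
proof (intro conjI allI impI)
  show "(n + 1) div 2 \<le> length (odds w)" using assms by (simp add: pre_def length_odds div_le_mono)
next
  fix j assume j: "j < (n + 1) div 2"
  then have "j < length (odds w)" using assms by (simp add: pre_def length_odds) linarith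
  moreover have "2*j < n" using j by linarith
  ultimately show "odds w ! j" using odds_nth[of j w] assms by (auto simp: pre_def)
qed

lemma pre_evens: assumes "pre n w" shows "pre (n div 2) (evens w)"
  unfolding pre_def
proof (intro conjI allI impI)
  show "n div 2 \<le> length (evens w)" using assms by (simp add: pre_def length_evens div_le_mono)
next
  fix j assume j: "j < n div 2"
  then have "j < length (evens w)" using assms by (simp add: pre_def length_evens) linarith
  moreover have "2*j+1 < n" using j by linarith
  ultimately show "evens w ! j" using evens_nth[of j w] assms by (auto simp: pre_def)
qed




lemma zipn_base:
  assumes "length w \<le> 1" "length x \<le> length w" "length y \<le> length x" "length z \<le> length y" "length x \<noteq> 0"
  shows "zipn [w,x,y,z] = w @ x @ y @ z"
proof -
  obtain a where w: "w = [a]" using assms by (cases w) auto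
  obtain b where x: "x = [b]" using assms w by (cases x) auto
  have y: "y = [] \<or> (\<exists>c. y = [c])" using assms x by (cases y) auto
  have lz: "length z \<le> 1" using assms x w by simp
  have z: "z = [] \<or> (\<exists>c. z = [c])" using lz by (cases z) auto
  show ?thesis using y z by (auto simp: w x zipn_def)
qed

lemma cnt_eq: "count (mset (r::bool list)) True = length (filter (\<lambda>b. b) r)"
  by (induction r) auto

lemma sorted_bool: "sorted (s::bool list) \<Longrightarrow> s = replicate (length (filter Not s)) False @ replicate (length (filter (\<lambda>b. b) s)) True"
proof (induction s)
  case Nil then show ?case by simp
next
  case (Cons a s)
  show ?case
  proof (cases a)
    case True
    then have all: "\<forall>b\<in>set s. b" using Cons.prems by auto
    have e: "a # s = replicate (Suc (length s)) True"
      using True all replicate_length_same[of s True] by simp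
    have F1: "filter Not (a#s) = []" and F2: "filter (\<lambda>b. b) (a#s) = a#s" using True all by (auto simp: filter_empty_conv)
    show ?thesis unfolding F1 F2 by (simp only: e length_Cons length_replicate list.size(3) replicate_0 append_Nil)
  next
    case False
    then show ?thesis using Cons by simp
  qed
qed

lemma lead_rep: "lead (replicate n True @ r) = n + lead r" by (induction n) auto

lemma lead_rev_sort: "lead (rev (sort (l::bool list))) = count (mset l) True"
proof -
  have s: "sort l = replicate (length (filter Not (sort l))) False @ replicate (length (filter (\<lambda>b. b) (sort l))) True"
    by (rule sorted_bool) simp
  have "rev (sort l) = replicate (length (filter (\<lambda>b. b) (sort l))) True @ replicate (length (filter Not (sort l))) False"
    by (subst s) simp
  then have "lead (rev (sort l)) = length (filter (\<lambda>b. b) (sort l))"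
    using lead_rep[of _ "replicate (length (filter Not (sort l))) False"]
    by (cases "length (filter Not (sort l))") auto
  also have "\<dots> = count (mset (sort l)) True" by (simp only: cnt_eq)
  finally show ?thesis by simp
qed

lemma lead_le_count: "lead r \<le> count (mset r) True"
  by (induction r) auto

lemma lead_le_length: "lead r \<le> length r"
  by (induction r) auto




lemma arith_lin:
  fixes k A B h r a0 b0 a1 a2 b1 b2 g d :: nat
  assumes "B \<le> A" "A \<le> B + 4" "k = 2*h + r" "r \<le> 1"
   "a0 = min (h+2) A" "b0 = min h B" "a0 = a1 + a2" "a2 \<le> a1" "a1 \<le> a2 + 1"
   "b0 = b1 + b2" "b2 \<le> b1" "b1 \<le> b2 + 1"
   "g = min (h+1) (min a1 (b1+2) + min b1 a1)" "d = min h (min a2 (b2+2) + min b2 a2)"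
  shows "min k (A+B) \<le> min k (min g (d+2) + min d g)"
  using assms unfolding min_def by (simp split: if_splits)

lemma half_facts: "(n+1) div 2 + n div 2 = (n::nat)" "n div 2 \<le> (n+1) div 2" "(n+1) div 2 \<le> n div 2 + 1"
  by presburger+

lemma merge4_main:
  "length x \<le> length w \<Longrightarrow> length y \<le> length x \<Longrightarrow> length z \<le> length y \<Longrightarrow>
   length (merge4 k w x y z) = length w + length x + length y + length z \<and>
   mset (merge4 k w x y z) = mset w + mset x + mset y + mset z \<and>
   pre (min k (lead w + lead x + lead y + lead z)) (merge4 k w x y z)"
proof (induction k w x y z rule: merge4.induct)
  case (1 k w x y z)
  show ?case
  proof (cases "length x = 0")
    case True
    then have "x = []" "y = []" "z = []" using "1.prems" by auto
    moreover have "merge4 k w x y z = w" using True by (subst merge4.simps) simp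
    ultimately show ?thesis using pre_mono[OF pre_lead[of w]] by simp
  next
    case x0: False
    show ?thesis
    proof (cases "length w \<le> 1")
      case True
      have e: "merge4 k w x y z = rev (sort (w@x@y@z))"
        using x0 True zipn_base[OF True "1.prems" x0] by (subst merge4.simps) simp
      have "lead w + lead x + lead y + lead z \<le> count (mset (w@x@y@z)) True"
        using lead_le_count[of w] lead_le_count[of x] lead_le_count[of y] lead_le_count[of z] by simp
      then have "pre (min k (lead w + lead x + lead y + lead z)) (rev (sort (w@x@y@z)))"
        using pre_mono[OF pre_lead[of "rev (sort (w@x@y@z))"]] unfolding lead_rev_sort by simp
      then show ?thesis unfolding e by (simp add: ac_simps)
    next
      case w1: False
      define h where "h = k div 2"
      define sa where "sa = (length w + 1) div 2 + (length x + 1) div 2 + (length y + 1) div 2 + (length z + 1) div 2"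
      define sb where "sb = length w div 2 + length x div 2 + length y div 2 + length z div 2"
      define a where "a = merge4 (min sa (k div 2 + 2)) (odds w) (odds x) (odds y) (odds z)"
      define b where "b = merge4 (min sb (k div 2)) (evens w) (evens x) (evens y) (evens z)"
      define c where "c = oe_combine (k div 2 + 1) (odds a) (odds b)"
      define d where "d = oe_combine (k div 2) (evens a) (evens b)"
      have e: "merge4 k w x y z = oe_combine k c d"
        using x0 w1 by (subst merge4.simps) (simp only: Let_def sa_def sb_def a_def b_def c_def d_def if_False)
      have oo: "length (odds x) \<le> length (odds w)" "length (odds y) \<le> length (odds x)" "length (odds z) \<le> length (odds y)"
        using "1.prems" by (simp_all add: length_odds div_le_mono)
      have eo: "length (evens x) \<le> length (evens w)" "length (evens y) \<le> length (evens x)" "length (evens z) \<le> length (evens y)"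
        using "1.prems" by (simp_all add: length_evens div_le_mono)
      have IHa: "length a = sa \<and> mset a = mset (odds w) + mset (odds x) + mset (odds y) + mset (odds z) \<and>
         pre (min (min sa (k div 2 + 2)) (lead (odds w) + lead (odds x) + lead (odds y) + lead (odds z))) a"
        using "1.IH"(1)[OF x0 w1 sa_def sb_def oo] unfolding a_def by (simp add: length_odds sa_def)
      have IHb: "length b = sb \<and> mset b = mset (evens w) + mset (evens x) + mset (evens y) + mset (evens z) \<and>
         pre (min (min sb (k div 2)) (lead (evens w) + lead (evens x) + lead (evens y) + lead (evens z))) b"
        using "1.IH"(2)[OF x0 w1 sa_def sb_def a_def eo] unfolding b_def by (simp add: length_evens sb_def)
      define A where "A = (lead w + 1) div 2 + (lead x + 1) div 2 + (lead y + 1) div 2 + (lead z + 1) div 2"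
      define B where "B = lead w div 2 + lead x div 2 + lead y div 2 + lead z div 2"
      have lo: "(lead v + 1) div 2 \<le> lead (odds v)" "lead v div 2 \<le> lead (evens v)" for v
        using pre_le_lead[OF pre_odds[OF pre_lead]] pre_le_lead[OF pre_evens[OF pre_lead]] by auto
      have ll: "(lead v + 1) div 2 \<le> (length v + 1) div 2" "lead v div 2 \<le> length v div 2" for v
        using lead_le_length[of v] by (simp_all add: div_le_mono)
      have Asa: "A \<le> sa" unfolding A_def sa_def using ll by (meson add_le_mono)
      have Bsb: "B \<le> sb" unfolding B_def sb_def using ll by (meson add_le_mono)
      have AL: "A \<le> lead (odds w) + lead (odds x) + lead (odds y) + lead (odds z)"
        unfolding A_def using lo by (meson add_le_mono)
      have BL: "B \<le> lead (evens w) + lead (evens x) + lead (evens y) + lead (evens z)"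
        unfolding B_def using lo by (meson add_le_mono)
      define a0 where "a0 = min (h+2) A"
      define b0 where "b0 = min h B"
      have pa: "pre a0 a" using IHa Asa AL unfolding a0_def h_def by (auto elim!: pre_mono)
      have pb: "pre b0 b" using IHb Bsb BL unfolding b0_def h_def by (auto elim!: pre_mono)
      have sab: "sb \<le> sa" unfolding sa_def sb_def using half_facts(2) by (meson add_le_mono)
      have l1: "length (odds b) \<le> length (odds a)" using IHa IHb sab by (simp add: length_odds div_le_mono)
      have l2: "length (evens b) \<le> length (evens a)" using IHa IHb sab by (simp add: length_evens div_le_mono)
      define a1 where "a1 = (a0+1) div 2"
      define b1 where "b1 = (b0+1) div 2"
      define a2 where "a2 = a0 div 2"
      define b2 where "b2 = b0 div 2"
      define gg where "gg = min (h+1) (min a1 (b1+2) + min b1 a1)"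
      define dd where "dd = min h (min a2 (b2+2) + min b2 a2)"
      have pc: "pre gg c" unfolding gg_def c_def h_def a1_def b1_def
        using combine[OF l1 pre_odds[OF pa] pre_odds[OF pb]] .
      have pd: "pre dd d" unfolding dd_def d_def h_def a2_def b2_def
        using combine[OF l2 pre_evens[OF pa] pre_evens[OF pb]] .
      note Pc = oe_combine_props[OF l1, of "k div 2 + 1"]
      note Pd = oe_combine_props[OF l2, of "k div 2"]
      have lcd: "length d \<le> length c" using Pc Pd unfolding c_def d_def
        by (simp add: length_odds length_evens)
      note Pf = oe_combine_props[OF lcd, of k]
      have pf: "pre (min k (min gg (dd+2) + min dd gg)) (oe_combine k c d)"
        using combine[OF lcd pc pd] .
      have AB: "A + B = lead w + lead x + lead y + lead z" "B \<le> A" "A \<le> B + 4"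
        unfolding A_def B_def using half_facts[of "lead w"] half_facts[of "lead x"] half_facts[of "lead y"] half_facts[of "lead z"]
        by linarith+
      have ar: "min k (A+B) \<le> min k (min gg (dd+2) + min dd gg)"
        by (rule arith_lin[OF AB(2,3), of k h "k mod 2" a0 b0 a1 a2 b1 b2 gg dd])
           (auto simp: h_def a0_def b0_def a1_def a2_def b1_def b2_def gg_def dd_def)
      have len: "length (oe_combine k c d) = length w + length x + length y + length z"
      proof -
        have oe: "length (odds v) + length (evens v) = length v" for v :: "bool list"
          by (simp add: length_odds length_evens)
        have "length (oe_combine k c d) = length c + length d" using Pf by simp
        also have "\<dots> = (length (odds a) + length (evens a)) + (length (odds b) + length (evens b))"
          using Pc Pd unfolding c_def d_def by simp
        also have "\<dots> = sa + sb" using IHa IHb oe by simp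
        also have "\<dots> = length w + length x + length y + length z"
          unfolding sa_def sb_def using half_facts(1)[of "length w"] half_facts(1)[of "length x"]
            half_facts(1)[of "length y"] half_facts(1)[of "length z"] by linarith
        finally show ?thesis .
      qed
      have ms: "mset (oe_combine k c d) = mset w + mset x + mset y + mset z"
      proof -
        have "mset (oe_combine k c d) = mset c + mset d" using Pf by simp
        also have "\<dots> = (mset (odds a) + mset (evens a)) + (mset (odds b) + mset (evens b))"
        proof -
          have mc: "mset c = mset (odds a) + mset (odds b)" unfolding c_def using Pc by blast
          have md: "mset d = mset (evens a) + mset (evens b)" unfolding d_def using Pd by blast
          show ?thesis unfolding mc md by (simp add: ac_simps)
        qed
        also have "\<dots> = mset a + mset b" by (simp only: mset_odds_evens)
        also have "\<dots> = (mset (odds w) + mset (evens w)) + (mset (odds x) + mset (evens x))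
            + (mset (odds y) + mset (evens y)) + (mset (odds z) + mset (evens z))"
        proof -
          have "mset a = mset (odds w) + mset (odds x) + mset (odds y) + mset (odds z)" using IHa by blast
          moreover have "mset b = mset (evens w) + mset (evens x) + mset (evens y) + mset (evens z)" using IHb by blast
          ultimately show ?thesis by (simp add: ac_simps)
        qed
        also have "\<dots> = mset w + mset x + mset y + mset z" by (simp only: mset_odds_evens)
        finally show ?thesis .
      qed
      show ?thesis unfolding e using len ms pre_mono[OF pf ar[unfolded AB(1)]] by simp
    qed
  qed
qed




lemma lead_nth: "j < lead r \<Longrightarrow> r ! j"
  using pre_lead[of r] by (auto simp: pre_def)

lemma lead_not: "lead r < length r \<Longrightarrow> \<not> r ! (lead r)"
  by (induction r) auto

lemma count0: "count (mset r) True = 0 \<Longrightarrow> \<forall>x\<in>set r. \<not> x"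
  by (metis (full_types) count_eq_zero_iff set_mset_mset)

lemma sorted_char: "count (mset r) True \<le> lead r \<Longrightarrow> j < length r \<Longrightarrow> r ! j = (j < lead r)"
proof (induction r arbitrary: j)
  case Nil then show ?case by simp
next
  case (Cons a r)
  show ?case
  proof (cases a)
    case True
    then have c: "count (mset r) True \<le> lead r" using Cons.prems(1) by simp
    show ?thesis
    proof (cases j)
      case 0 then show ?thesis using True by simp
    next
      case (Suc j')
      then have "j' < length r" using Cons.prems(2) by simp
      then have "r ! j' = (j' < lead r)" using Cons.IH[OF c] by blast
      then show ?thesis using Suc True by simp
    qed
  next
    case False
    then have "count (mset r) True = 0" using Cons.prems by simp
    then have all: "\<forall>x\<in>set r. \<not> x" by (rule count0)
    show ?thesis
    proof (cases j)
      case 0 then show ?thesis using False by simp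
    next
      case (Suc j')
      then have "j' < length r" using Cons.prems(2) by simp
      then have "\<not> r ! j'" using all nth_mem by blast
      then show ?thesis using Suc False by simp
    qed
  qed
qed

lemma count_le_lead: "(\<forall>j. lead r \<le> j \<longrightarrow> j < length r \<longrightarrow> \<not> r ! j) \<Longrightarrow> count (mset r) True \<le> lead r"
proof (induction r)
  case Nil then show ?case by simp
next
  case (Cons a r)
  show ?case
  proof (cases a)
    case True
    have "\<forall>j. lead r \<le> j \<longrightarrow> j < length r \<longrightarrow> \<not> r ! j"
    proof (intro allI impI)
      fix j assume "lead r \<le> j" "j < length r"
      then show "\<not> r ! j" using Cons.prems[rule_format, of "Suc j"] True by simp
    qed
    then show ?thesis using Cons.IH True by simp
  next
    case False
    have "\<forall>x\<in>set r. \<not> x"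
    proof
      fix x assume "x \<in> set r"
      then obtain j where "j < length r" "r ! j = x" by (auto simp: in_set_conv_nth)
      then show "\<not> x" using Cons.prems[rule_format, of "Suc j"] False by simp
    qed
    then have "count (mset r) True = 0" by (induction r) auto
    then show ?thesis using False by simp
  qed
qed

lemma T1:
  assumes "min k (count (mset r) True) \<le> lead r"
  shows "top_sorted k r"
proof -
  have key: "r ! j \<le> r ! i" if "i < j" "j < length r" "i < k" for i j
  proof (cases "k \<le> lead r")
    case True
    then show ?thesis using lead_nth[of i r] that by simp
  next
    case False
    then have "count (mset r) True \<le> lead r" using assms by simp
    then show ?thesis using sorted_char[of r] that by auto
  qed
  show ?thesis unfolding top_sorted_def sorted_desc_def
  proof (intro conjI allI impI)
    show "sorted_wrt (\<ge>) (take k r)"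
      unfolding sorted_wrt_iff_nth_less using key by auto
  next
    fix i j assume "i < k" "k \<le> j" "j < length r"
    then have "i < j" by simp
    then show "r ! j \<le> r ! i" using key \<open>i < k\<close> \<open>j < length r\<close> by blast
  qed
qed

lemma T2:
  assumes ts: "top_sorted k r"
  shows "min k (length r) \<le> lead r \<or> lead r = count (mset r) True"
proof (cases "min k (length r) \<le> lead r")
  case False
  define n where "n = lead r"
  have nk: "n < k" "n < length r" using False n_def by auto
  have rn: "\<not> r ! n" using lead_not nk n_def by simp
  have "\<forall>j. lead r \<le> j \<longrightarrow> j < length r \<longrightarrow> \<not> r ! j"
  proof (intro allI impI)
    fix j assume j: "lead r \<le> j" "j < length r"
    show "\<not> r ! j"
    proof (cases "j = n")
      case True then show ?thesis using rn by simp
    next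
      case jn: False
      show ?thesis
      proof (cases "j < k")
        case True
        have "sorted_wrt (\<ge>) (take k r)" using ts by (simp add: top_sorted_def sorted_desc_def)
        moreover have "n < j" using j jn n_def by simp
        ultimately have "take k r ! j \<le> take k r ! n"
          unfolding sorted_wrt_iff_nth_less using j True by auto
        then show ?thesis using True nk rn by simp
      next
        case False
        then have kj: "k \<le> j" by simp
        have "r ! j \<le> r ! n" using ts nk(1) j(2) kj unfolding top_sorted_def by blast
        then show ?thesis using rn by simp
      qed
    qed
  qed
  then have "count (mset r) True \<le> lead r" by (rule count_le_lead)
  then show ?thesis using lead_le_count[of r] by simp
qed simp

theorem mainTheorem8:
  fixes k k' :: nat and w x y z :: "bool list"
  assumes "1 \<le> k'" and "k' \<le> k"
    and "length w \<ge> length x" and "length x \<ge> length y" and "length y \<ge> length z"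
    and "top_sorted k' w" and "top_sorted k' x" and "top_sorted k' y" and "top_sorted k' z"
    and "length w + length x + length y + length z \<ge> k"
  shows "top_sorted k' (merge4 k w x y z)"
proof -
  define r where "r = merge4 k w x y z"
  have M: "mset r = mset w + mset x + mset y + mset z"
    and P: "pre (min k (lead w + lead x + lead y + lead z)) r"
    using merge4_main[OF assms(3,4,5), of k] unfolding r_def by auto
  have C: "count (mset r) True = count (mset w) True + count (mset x) True + count (mset y) True + count (mset z) True"
    using M by simp
  have L: "min k (lead w + lead x + lead y + lead z) \<le> lead r" using pre_le_lead[OF P] .
  have big: "k' \<le> lead v" if "min k' (length v) \<le> lead v" "lead v \<noteq> count (mset v) True" for v
  proof -
    have "lead v < count (mset v) True" using that(2) lead_le_count[of v] by simp
    moreover have "count (mset v) True \<le> length v" by (induction v) auto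
    ultimately show ?thesis using that(1) by simp
  qed
  have "min k' (count (mset r) True) \<le> lead r"
  proof (cases "lead w = count (mset w) True \<and> lead x = count (mset x) True \<and> lead y = count (mset y) True \<and> lead z = count (mset z) True")
    case True
    then show ?thesis using L C assms(2) by simp
  next
    case False
    have kv: "k' \<le> lead v" if "top_sorted k' v" "lead v \<noteq> count (mset v) True" for v
      using T2[OF that(1)] big[of v] that(2) by blast
    from False have "lead w \<noteq> count (mset w) True \<or> lead x \<noteq> count (mset x) True \<or>
       lead y \<noteq> count (mset y) True \<or> lead z \<noteq> count (mset z) True" by blast
    then have "k' \<le> lead w + lead x + lead y + lead z"
    proof (elim disjE)
      assume "lead w \<noteq> count (mset w) True" then show ?thesis using kv[OF assms(6)] by linarith
    next
      assume "lead x \<noteq> count (mset x) True" then show ?thesis using kv[OF assms(7)] by linarith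
    next
      assume "lead y \<noteq> count (mset y) True" then show ?thesis using kv[OF assms(8)] by linarith
    next
      assume "lead z \<noteq> count (mset z) True" then show ?thesis using kv[OF assms(9)] by linarith
    qed
    then show ?thesis using L assms(2) by simp
  qed
  then show ?thesis unfolding r_def[symmetric] by (rule T1)
qed


end
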